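(* Let $k > k' > 0$. There exists a $k$-local function $f:\{0,1\}^n\to\mathbb{R}$ with $\max_{x\in\{0,1\}^n}|f(x)| \le 1$ such that for every $k'$-local function $g:\{0,1\}^n\to\mathbb{R}$, $$\max_{x\in\{0,1\}^n}|f(x) - g(x)| \ge 2^{-k'}.$$
   Context: A function $f:\{0,1\}^n\to\mathbb{R}$ is $k$-local if it can be written as a sum $f = \sum_i f_i$ of functions $f_i:\{0,1\}^n\to\mathbb{R}$ each depending on at most $k$ of its inputs. *)

theory Defs
  imports Complex_Main
begin

text \<open>The Boolean cube {0,1}^n, represented as bit-vectors x :: nat => bool
  with x i = False for all i >= n (coordinates are 0..n-1).\<close>
definition cube :: "nat \<Rightarrow> (nat \<Rightarrow> bool) set" where
  "cube n = {x. \<forall>i\<ge>n. \<not> x i}"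

definition depends_only_on :: "nat \<Rightarrow> nat set \<Rightarrow> ((nat \<Rightarrow> bool) \<Rightarrow> real) \<Rightarrow> bool" where
  "depends_only_on n S h \<longleftrightarrow>
     (\<forall>x\<in>cube n. \<forall>y\<in>cube n. (\<forall>i\<in>S. x i = y i) \<longrightarrow> h x = h y)"

definition k_local :: "nat \<Rightarrow> nat \<Rightarrow> ((nat \<Rightarrow> bool) \<Rightarrow> real) \<Rightarrow> bool" where
  "k_local n k f \<longleftrightarrow>
     (\<exists>m (fs :: nat \<Rightarrow> (nat \<Rightarrow> bool) \<Rightarrow> real) (Ss :: nat \<Rightarrow> nat set).
        (\<forall>j<m. Ss j \<subseteq> {..<n} \<and> card (Ss j) \<le> k \<and> depends_only_on n (Ss j) (fs j)) \<and>
        (\<forall>x\<in>cube n. f x = (\<Sum>j<m. fs j x)))"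

end

theory Submission
  imports Defs
begin

lemma cube_finite: "finite (cube m)"
proof -
  have "inj_on (\<lambda>x. {i. x i}) (cube m)"
  proof (rule inj_onI)
    fix x y assume "{i. x i} = {i. y i}"
    then show "x = y" by (auto simp: set_eq_iff)
  qed
  moreover have "(\<lambda>x. {i. x i}) ` cube m \<subseteq> Pow {..<m}"
    by (auto simp: cube_def) (meson not_le)
  ultimately show ?thesis
    by (meson finite_Pow_iff finite_imageD finite_lessThan finite_subset)
qed

definition par :: "nat \<Rightarrow> (nat \<Rightarrow> bool) \<Rightarrow> real" where
  "par m x = (-1) ^ card {j. j < m \<and> x j}"

lemma par_flip:
  assumes "i < m"
  shows "par m (x(i := \<not> x i)) = - par m x"
proof (cases "x i")
  case True
  let ?A = "{j. j < m \<and> x j}"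
  have A: "{j. j < m \<and> (x(i := \<not> x i)) j} = ?A - {i}" using True by auto
  have fin: "finite ?A" by simp
  have "i \<in> ?A" using True assms by simp
  then have c: "card ?A = Suc (card (?A - {i}))"
    using fin by (metis card_Suc_Diff1)
  show ?thesis unfolding par_def A using c by simp
next
  case False
  let ?A = "{j. j < m \<and> x j}"
  have A: "{j. j < m \<and> (x(i := \<not> x i)) j} = insert i ?A" using False assms by auto
  have "i \<notin> ?A" using False by simp
  then have c: "card (insert i ?A) = Suc (card ?A)" by simp
  show ?thesis unfolding par_def A using c by simp
qed

lemma par_abs: "par m x = 1 \<or> par m x = -1"
  unfolding par_def by (cases "even (card {j. j < m \<and> x j})") auto

lemma par_dep: "\<forall>i\<in>{..<m}. x i = y i \<Longrightarrow> par m x = par m y"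
proof -
  assume "\<forall>i\<in>{..<m}. x i = y i"
  then have "{j. j < m \<and> x j} = {j. j < m \<and> y j}" by auto
  then show ?thesis unfolding par_def by simp
qed

lemma key:
  assumes fin: "finite T" and c: "card T \<le> k'" and d: "depends_only_on n T h"
    and kn: "Suc k' \<le> n"
  shows "(\<Sum>x\<in>cube (Suc k'). par (Suc k') x * h x) = 0"
proof -
  obtain i where i: "i < Suc k'" "i \<notin> T"
  proof (rule ccontr)
    assume "\<not> thesis"
    with that have "{..<Suc k'} \<subseteq> T" by auto
    then have "card {..<Suc k'} \<le> card T" using fin by (rule card_mono[rotated])
    then show False using c by simp
  qed
  define \<sigma> where "\<sigma> x = x(i := \<not> x i)" for x :: "nat \<Rightarrow> bool"
  let ?B = "cube (Suc k')"
  let ?F = "\<lambda>x. par (Suc k') x * h x"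
  have sub: "?B \<subseteq> cube n" using kn by (auto simp: cube_def)
  have inv: "\<sigma> (\<sigma> x) = x" for x by (auto simp: \<sigma>_def)
  have mem: "x \<in> ?B \<Longrightarrow> \<sigma> x \<in> ?B" for x using i by (auto simp: \<sigma>_def cube_def)
  have F: "?F (\<sigma> x) = - ?F x" if "x \<in> ?B" for x
  proof -
    have "h (\<sigma> x) = h x"
      using d mem[OF that] that sub i(2) unfolding depends_only_on_def
      by (metis (no_types, lifting) \<sigma>_def fun_upd_other subsetD)
    then show ?thesis using par_flip[OF i(1)] by (simp add: \<sigma>_def)
  qed
  have "sum ?F ?B = sum (\<lambda>x. ?F (\<sigma> x)) ?B"
    by (rule sum.reindex_bij_witness[of _ \<sigma> \<sigma>]) (auto simp: inv mem)
  also have "\<dots> = sum (\<lambda>x. - ?F x) ?B" by (rule sum.cong) (auto simp: F)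
  also have "\<dots> = - sum ?F ?B" by (simp add: sum_negf)
  finally have "sum ?F ?B = - sum ?F ?B" .
  then show ?thesis by (subst (asm) equal_neg_zero)
qed

theorem lemma12:
  fixes n k k' :: nat
  assumes "0 < k'" and "k' < k" and "k \<le> n"
  shows "\<exists>f. k_local n k f \<and> (\<forall>x\<in>cube n. \<bar>f x\<bar> \<le> 1) \<and>
           (\<forall>g. k_local n k' g \<longrightarrow> (\<exists>x\<in>cube n. \<bar>f x - g x\<bar> \<ge> 1 / 2 ^ k'))"
proof (intro exI conjI)
  let ?f = "par (Suc k')"
  have kn: "Suc k' \<le> n" using assms by simp
  show "k_local n k ?f"
    unfolding k_local_def
    apply (rule exI[of _ 1], rule exI[of _ "\<lambda>_. ?f"], rule exI[of _ "\<lambda>_. {..<Suc k'}"])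
    using assms unfolding depends_only_on_def by (simp add: par_dep)
  show "\<forall>x\<in>cube n. \<bar>?f x\<bar> \<le> 1" using par_abs by (metis abs_neg_one abs_one order_refl)
  show "\<forall>g. k_local n k' g \<longrightarrow> (\<exists>x\<in>cube n. \<bar>?f x - g x\<bar> \<ge> 1 / 2 ^ k')"
  proof (intro allI impI)
  fix g assume "k_local n k' g"
  then obtain m :: nat and fs Ss where H: "\<forall>j<m. Ss j \<subseteq> {..<n} \<and> card (Ss j) \<le> k' \<and> depends_only_on n (Ss j) (fs j)"
    and G: "\<forall>x\<in>cube n. g x = (\<Sum>j<m. fs j x)" unfolding k_local_def by blast
  let ?B = "cube (Suc k')"
  have sub: "?B \<subseteq> cube n" using kn by (auto simp: cube_def)
  show "\<exists>x\<in>cube n. \<bar>?f x - g x\<bar> \<ge> 1 / 2 ^ k'"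
  proof (rule ccontr)
    assume na: "\<not> ?thesis"
    then have lt: "\<bar>?f x - g x\<bar> < 1" if "x \<in> cube n" for x
    proof -
      have "\<bar>?f x - g x\<bar> < 1 / 2 ^ k'" using na that by (simp add: not_le)
      moreover have "1 / 2 ^ k' \<le> (1::real)" by simp
      ultimately show ?thesis by linarith
    qed
    have pos: "?f x * g x > 0" if "x \<in> ?B" for x
    proof -
      have l: "\<bar>?f x - g x\<bar> < 1" using lt sub that by blast
      show ?thesis
      proof (cases "?f x = 1")
        case True then show ?thesis using l by (simp add: abs_less_iff)
      next
        case False then have "?f x = -1" using par_abs by blast
        then show ?thesis using l by (simp add: abs_less_iff)
      qed
    qed
    have ne: "(\<lambda>_. False) \<in> ?B" by (simp add: cube_def)
    have "(\<Sum>x\<in>?B. ?f x * g x) > 0"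
      by (rule sum_pos[OF cube_finite _ pos]) (use ne in blast)+
    moreover have "(\<Sum>x\<in>?B. ?f x * g x) = (\<Sum>x\<in>?B. \<Sum>j<m. ?f x * fs j x)"
      using G sub by (auto intro!: sum.cong simp: sum_distrib_left)
    also have "\<dots> = (\<Sum>j<m. \<Sum>x\<in>?B. ?f x * fs j x)" by (rule sum.swap)
    also have "\<dots> = 0"
    proof (rule sum.neutral, intro ballI)
      fix j assume "j \<in> {..<m}"
      then have "Ss j \<subseteq> {..<n}" "card (Ss j) \<le> k'" "depends_only_on n (Ss j) (fs j)"
        using H by auto
      then show "(\<Sum>x\<in>?B. ?f x * fs j x) = 0"
        using key kn by (meson finite_lessThan finite_subset)
    qed
    finally show False by simp
  qed
  qed
qed

end
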